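(* Fix $b\in\mathbb{N}$. A given $b$-pattern $P$ is realizable in $L=\mathbb{N}\times\mathbb{N}$ if and only if, for every prime $p$, the set of circles of $P$ does not contain a complete rectangle modulo $(p,p^b)$.
   Context: $\mathbb{N}=\{1,2,3,\dots\}$, $L=\mathbb{N}\times\mathbb{N}$. For $r,s\in\mathbb{N}$, $\gcd_b(r,s)=\max\{k\in\mathbb{N} : k\mid r \text{ and } k^b\mid s\}$; a point $(r,s)\in L$ is $b$-visible if $\gcd_b(r,s)=1$ and $b$-invisible otherwise. A $b$-pattern $P$ is obtained by choosing a positive integer $w$ and assigning to each $(r,s)\in L$ with $1\le r\le w$, $1\le s\le w^b$ either a cross, a circle, or neither. $P$ is realizable in $L$ if there is $(u,v)\in L$ such that $(u+r,v+s)$ is $b$-visible for every circle $(r,s)$ of $P$ and $(u+r,v+s)$ is $b$-invisible for every cross $(r,s)$ of $P$. For a positive integer $m$, a complete rectangle modulo $(m,m^b)$ is a collection of $m^{b+1}$ points of $L$ containing a complete system of residues of $\mathbb{Z}/m\mathbb{Z}\times\mathbb{Z}/m^b\mathbb{Z}$ (i.e. whose images under $(x,y)\mapsto(x \bmod m, y\bmod m^b)$ are all of $\mathbb{Z}/m\mathbb{Z}\times\mathbb{Z}/m^b\mathbb{Z}$). *)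

theory Defs
  imports "HOL-Computational_Algebra.Primes"
begin

definition Lat :: "(nat \<times> nat) set" where
  "Lat = {(r, s). 1 \<le> r \<and> 1 \<le> s}"

definition gcd_b :: "nat \<Rightarrow> nat \<Rightarrow> nat \<Rightarrow> nat" where
  "gcd_b b r s = Max {k. 1 \<le> k \<and> k dvd r \<and> k ^ b dvd s}"

definition b_visible :: "nat \<Rightarrow> nat \<times> nat \<Rightarrow> bool" where
  "b_visible b x = (gcd_b b (fst x) (snd x) = 1)"

definition b_invisible :: "nat \<Rightarrow> nat \<times> nat \<Rightarrow> bool" where
  "b_invisible b x = (\<not> b_visible b x)"

datatype mark = Cross | Circle

text \<open>A b-pattern of width w: an assignment of cross / circle / neither (None)
  to the points (r,s) with 1 <= r <= w, 1 <= s <= w^b (None outside this box).\<close>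
definition is_b_pattern :: "nat \<Rightarrow> nat \<Rightarrow> (nat \<times> nat \<Rightarrow> mark option) \<Rightarrow> bool" where
  "is_b_pattern b w P = (1 \<le> w \<and>
     (\<forall>r s. P (r, s) \<noteq> None \<longrightarrow> 1 \<le> r \<and> r \<le> w \<and> 1 \<le> s \<and> s \<le> w ^ b))"

definition circles :: "(nat \<times> nat \<Rightarrow> mark option) \<Rightarrow> (nat \<times> nat) set" where
  "circles P = {x. P x = Some Circle}"

definition crosses :: "(nat \<times> nat \<Rightarrow> mark option) \<Rightarrow> (nat \<times> nat) set" where
  "crosses P = {x. P x = Some Cross}"

definition realizable :: "nat \<Rightarrow> (nat \<times> nat \<Rightarrow> mark option) \<Rightarrow> bool" where
  "realizable b P = (\<exists>u v. (u, v) \<in> Lat \<and>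
     (\<forall>(r, s) \<in> circles P. b_visible b (u + r, v + s)) \<and>
     (\<forall>(r, s) \<in> crosses P. b_invisible b (u + r, v + s)))"

definition complete_rectangle :: "nat \<Rightarrow> nat \<Rightarrow> (nat \<times> nat) set \<Rightarrow> bool" where
  "complete_rectangle b m S = (S \<subseteq> Lat \<and> finite S \<and> card S = m ^ (b + 1) \<and>
     (\<lambda>(x, y). (x mod m, y mod m ^ b)) ` S = {0..<m} \<times> {0..<m ^ b})"

end

theory Submission
  imports Defs "HOL-Number_Theory.Number_Theory"
begin

lemma dvd_shift:
  fixes m x a :: nat
  assumes "m > 0" "[x = (m - a mod m) mod m] (mod m)"
  shows "m dvd x + a"
proof -
  have "[x + a = (m - a mod m) mod m + a] (mod m)" using assms(2) by (simp add: cong_add)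
  moreover have "m dvd (m - a mod m) mod m + a"
  proof (cases "a mod m = 0")
    case True then show ?thesis by (simp add: mod_0_imp_dvd)
  next
    case False
    then have "(m - a mod m) mod m = m - a mod m" using assms(1) by simp
    moreover have "m - a mod m + a = m + (a - a mod m)" using mod_le_divisor[OF assms(1), of a] mod_less_eq_dividend[of a m] by linarith
    moreover have "m dvd a - a mod m" by (simp add: minus_mod_eq_mult_div)
    ultimately show ?thesis by (metis dvd_add dvd_refl)
  qed
  ultimately show ?thesis using cong_dvd_iff by blast
qed

lemma crt_exists:
  fixes I :: "'a set" and m \<alpha> :: "'a \<Rightarrow> nat"
  assumes "finite I" "\<forall>i\<in>I. \<forall>j\<in>I. i \<noteq> j \<longrightarrow> coprime (m i) (m j)" "\<forall>i\<in>I. m i > 0"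
  shows "\<exists>u\<ge>1. \<forall>i\<in>I. m i dvd u + \<alpha> i"
proof -
  obtain x where x: "\<forall>i\<in>I. [x = (m i - \<alpha> i mod m i) mod m i] (mod m i)"
    using chinese_remainder_nat[OF assms(1,2), of "\<lambda>i. (m i - \<alpha> i mod m i) mod m i"] by blast
  define M where "M = prod m I"
  have M: "M \<ge> 1" unfolding M_def using assms(3) by (simp add: Suc_le_eq prod_pos)
  show ?thesis
  proof (intro exI[of _ "x + M"] conjI ballI)
    show "1 \<le> x + M" using M by simp
    fix i assume i: "i \<in> I"
    have "m i dvd M" unfolding M_def using assms(1) i by (simp add: dvd_prod_eqI)
    then have "[M = 0] (mod m i)" by (simp add: cong_0_iff)
    then have "[x + M = x + 0] (mod m i)" by (intro cong_add cong_refl)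
    then have "[x + M = x] (mod m i)" by simp
    then have "[x + M = (m i - \<alpha> i mod m i) mod m i] (mod m i)" using x i cong_trans by blast
    then show "m i dvd x + M + \<alpha> i" using dvd_shift assms(3) i by blast
  qed
qed

lemma gcd_b_ge:
  assumes "x > 0" "k \<ge> 1" "k dvd x" "k ^ b dvd y"
  shows "k \<le> gcd_b b x y"
proof -
  have "finite {k. 1 \<le> k \<and> k dvd x \<and> k ^ b dvd y}"
    by (rule finite_subset[of _ "{..x}"]) (use assms(1) dvd_imp_le in auto)
  then show ?thesis unfolding gcd_b_def using assms by (intro Max_ge) auto
qed

lemma gcd_b_in:
  assumes "x > 0"
  shows "gcd_b b x y \<ge> 1 \<and> gcd_b b x y dvd x \<and> gcd_b b x y ^ b dvd y"
proof -
  have f: "finite {k. 1 \<le> k \<and> k dvd x \<and> k ^ b dvd y}"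
    by (rule finite_subset[of _ "{..x}"]) (use assms(1) dvd_imp_le in auto)
  have "1 \<in> {k. 1 \<le> k \<and> k dvd x \<and> k ^ b dvd y}" by simp
  then have "gcd_b b x y \<in> {k. 1 \<le> k \<and> k dvd x \<and> k ^ b dvd y}"
    unfolding gcd_b_def using f Max_in by blast
  then show ?thesis by simp
qed

lemma dvd2_mod_eq:
  fixes p u r r' :: nat
  assumes "p dvd u + r" "p dvd u + r'"
  shows "r mod p = r' mod p"
proof -
  have "[u + r = u + r'] (mod p)" using assms by (metis cong_def dvd_imp_mod_0)
  then have "[r = r'] (mod p)" using cong_add_lcancel_nat by blast
  then show ?thesis by (simp add: cong_def)
qed


theorem mainTheorem4:
  fixes b w :: nat and P :: "nat \<times> nat \<Rightarrow> mark option"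
  assumes "1 \<le> b" and "is_b_pattern b w P"
  shows "realizable b P \<longleftrightarrow>
    (\<forall>p::nat. prime p \<longrightarrow> \<not> (\<exists>S. S \<subseteq> circles P \<and> complete_rectangle b p S))"
proof -
  have hw: "1 \<le> w" using assms(2) unfolding is_b_pattern_def by simp
  have box: "\<And>r s. P (r, s) \<noteq> None \<Longrightarrow> 1 \<le> r \<and> r \<le> w \<and> 1 \<le> s \<and> s \<le> w ^ b"
    using assms(2) unfolding is_b_pattern_def by blast
  have circ_box: "\<And>r s. (r, s) \<in> circles P \<Longrightarrow> 1 \<le> r \<and> r \<le> w \<and> 1 \<le> s \<and> s \<le> w ^ b"
    using box unfolding circles_def by auto
  have cross_box: "\<And>r s. (r, s) \<in> crosses P \<Longrightarrow> 1 \<le> r \<and> r \<le> w \<and> 1 \<le> s \<and> s \<le> w ^ b"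
    using box unfolding crosses_def by auto
  have disj: "\<And>x. x \<in> circles P \<Longrightarrow> x \<in> crosses P \<Longrightarrow> False"
    unfolding circles_def crosses_def by auto
  have circ_Lat: "circles P \<subseteq> Lat" using circ_box unfolding Lat_def by auto
  show ?thesis
  proof
    assume "realizable b P"
    then obtain u v where uv: "(u, v) \<in> Lat"
      and vis: "\<forall>(r, s) \<in> circles P. b_visible b (u + r, v + s)"
      unfolding realizable_def by blast
    show "\<forall>p::nat. prime p \<longrightarrow> \<not> (\<exists>S. S \<subseteq> circles P \<and> complete_rectangle b p S)"
    proof (intro allI impI notI)
      fix p :: nat assume pp: "prime p" and "\<exists>S. S \<subseteq> circles P \<and> complete_rectangle b p S"
      then obtain S where S: "S \<subseteq> circles P" "complete_rectangle b p S" by blast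
      have p0: "p > 0" using pp prime_gt_0_nat by blast
      have pb0: "p ^ b > 0" using p0 by simp
      define a where "a = (p - u mod p) mod p"
      define c where "c = (p ^ b - v mod p ^ b) mod p ^ b"
      have "(a, c) \<in> {0..<p} \<times> {0..<p ^ b}" unfolding a_def c_def using p0 pb0 by simp
      then have "(a, c) \<in> (\<lambda>(x, y). (x mod p, y mod p ^ b)) ` S"
        using S(2) unfolding complete_rectangle_def by simp
      then obtain r s where rs: "(r, s) \<in> S" "r mod p = a" "s mod p ^ b = c" by auto
      have d1: "p dvd r + u"
        using dvd_shift[OF p0, of r u] rs(2) unfolding a_def by (simp add: cong_def)
      have d2: "p ^ b dvd s + v"
        using dvd_shift[OF pb0, of s v] rs(3) unfolding c_def by (simp add: cong_def)
      have r1: "1 \<le> r" using circ_box rs(1) S(1) by blast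
      have "p \<le> gcd_b b (u + r) (v + s)"
        using gcd_b_ge[of "u + r" p b "v + s"] d1 d2 p0 r1
        by (auto simp: add.commute)
      moreover have "gcd_b b (u + r) (v + s) = 1"
        using vis rs(1) S(1) unfolding b_visible_def by auto
      ultimately show False using prime_gt_1_nat[OF pp] by simp
    qed
  next
    assume H: "\<forall>p::nat. prime p \<longrightarrow> \<not> (\<exists>S. S \<subseteq> circles P \<and> complete_rectangle b p S)"
    have miss: "\<exists>ac. prime p \<longrightarrow> fst ac < p \<and> snd ac < p ^ b \<and>
        (\<forall>(r, s) \<in> circles P. \<not> (r mod p = fst ac \<and> s mod p ^ b = snd ac))" for p :: nat
    proof (cases "prime p")
      case False then show ?thesis by blast
    next
      case pp: True
      have p0: "p > 0" using pp prime_gt_0_nat by blast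
      define f where "f = (\<lambda>(x::nat, y::nat). (x mod p, y mod p ^ b))"
      define B where "B = {0..<p} \<times> {0..<(p::nat) ^ b}"
      show ?thesis
      proof (rule ccontr)
        assume nt: "\<not> ?thesis"
        have "\<forall>ac\<in>B. \<exists>x. x \<in> circles P \<and> f x = ac"
        proof
          fix ac assume ac: "ac \<in> B"
          show "\<exists>x. x \<in> circles P \<and> f x = ac"
          proof (rule ccontr)
            assume nx: "\<not> (\<exists>x. x \<in> circles P \<and> f x = ac)"
            have "prime p \<longrightarrow> fst ac < p \<and> snd ac < p ^ b \<and>
              (\<forall>(r, s) \<in> circles P. \<not> (r mod p = fst ac \<and> s mod p ^ b = snd ac))"
              using ac nx unfolding B_def f_def by auto
            then show False using nt by blast
          qed
        qed
        then obtain g where g: "\<forall>ac\<in>B. g ac \<in> circles P \<and> f (g ac) = ac"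
          by metis
        have inj: "inj_on g B" by (rule inj_onI) (metis g)
        have fin: "finite B" unfolding B_def by simp
        have cardB: "card B = p ^ (b + 1)" unfolding B_def by simp
        have img: "f ` g ` B = B"
          using g by (force simp: image_image)
        have img2: "(\<lambda>(x, y). (x mod p, y mod p ^ b)) ` g ` B = {0..<p} \<times> {0..<p ^ b}"
          using img unfolding f_def B_def .
        have "g ` B \<subseteq> Lat" using g circ_Lat by auto
        moreover have "card (g ` B) = p ^ (b + 1)" using card_image[OF inj] cardB by simp
        ultimately have "complete_rectangle b p (g ` B)"
          unfolding complete_rectangle_def using fin img2 by blast
        moreover have "g ` B \<subseteq> circles P" using g by auto
        ultimately show False using H pp by blast
      qed
    qed
    then obtain AC where AC: "\<And>p. prime p \<Longrightarrow> fst (AC p) < p \<and> snd (AC p) < p ^ b \<and>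
        (\<forall>(r, s) \<in> circles P. \<not> (r mod p = fst (AC p) \<and> s mod p ^ b = snd (AC p)))"
      by metis
    define A where "A = (\<lambda>p. fst (AC p))"
    define C where "C = (\<lambda>p. snd (AC p))"
    define X where "X = crosses P"
    have finX: "finite X"
      by (rule finite_subset[of _ "{1..w} \<times> {1..w^b}"]) (use cross_box in \<open>auto simp: X_def\<close>)
    have "infinite {p::nat. prime p \<and> w < p}"
    proof -
      have "{p::nat. prime p \<and> w < p} = {p. prime p} - {..w}" by auto
      then show ?thesis using primes_infinite by simp
    qed
    then obtain BB where BB: "BB \<subseteq> {p::nat. prime p \<and> w < p}" "finite BB" "card BB = card X"
      using infinite_arbitrarily_large by blast
    then obtain q where q: "bij_betw q X BB" using finite_same_card_bij finX by metis
    have qp: "\<And>x. x \<in> X \<Longrightarrow> prime (q x) \<and> w < q x" using q BB(1) bij_betwE by blast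
    have qinj: "inj_on q X" using q bij_betw_imp_inj_on by blast
    define base where "base = (\<lambda>i. case i of Inl p \<Rightarrow> p | Inr x \<Rightarrow> q x)"
    define PS where "PS = {p::nat. prime p \<and> p \<le> w}"
    define I1 where "I1 = Inl ` PS \<union> Inr ` X"
    have baseprime: "\<And>i. i \<in> Inl ` Z \<union> Inr ` X \<Longrightarrow> (\<And>p. p \<in> Z \<Longrightarrow> prime p) \<Longrightarrow> prime (base i)" for Z
      unfolding base_def using qp by auto
    have baseinj: "\<And>i j. i \<in> Inl ` Z \<union> Inr ` X \<Longrightarrow> j \<in> Inl ` Z \<union> Inr ` X \<Longrightarrow> i \<noteq> j
       \<Longrightarrow> Z \<inter> q ` X = {} \<Longrightarrow> base i \<noteq> base j" for Z
proof -
  fix i j assume i: "i \<in> Inl ` Z \<union> Inr ` X" and j: "j \<in> Inl ` Z \<union> Inr ` X" and ij: "i \<noteq> j"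
    and d: "Z \<inter> q ` X = {}"
  show "base i \<noteq> base j"
  proof (cases i)
    case (Inl p) note ip = this
    show ?thesis
    proof (cases j)
      case (Inl p') then show ?thesis using ip ij base_def by simp
    next
      case (Inr x) then show ?thesis using ip i j d base_def by auto
    qed
  next
    case (Inr x) note ix = this
    show ?thesis
    proof (cases j)
      case (Inl p') then show ?thesis using ix i j d base_def by auto
    next
      case (Inr y) then show ?thesis using ix i j ij qinj base_def by (auto simp: inj_on_eq_iff)
    qed
  qed
qed
    have PSQ: "PS \<inter> q ` X = {}"
    proof -
      { fix x assume "x \<in> X" "q x \<in> PS" then have False using qp[of x] unfolding PS_def by simp }
      then show ?thesis by blast
    qed
    have psp1: "\<And>p. p \<in> PS \<Longrightarrow> prime p" unfolding PS_def by simp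
    obtain u where u: "u \<ge> 1" "\<forall>i\<in>I1. base i dvd u + (case i of Inl p \<Rightarrow> A p | Inr x \<Rightarrow> fst x)"
    proof -
      have "\<exists>u\<ge>1. \<forall>i\<in>I1. base i dvd u + (case i of Inl p \<Rightarrow> A p | Inr x \<Rightarrow> fst x)"
      proof (rule crt_exists)
        have "finite PS" unfolding PS_def by (rule finite_subset[of _ "{..w}"]) auto
        then show "finite I1" unfolding I1_def using finX by (intro finite_UnI finite_imageI)
        show "\<forall>i\<in>I1. \<forall>j\<in>I1. i \<noteq> j \<longrightarrow> coprime (base i) (base j)"
        proof (intro ballI impI)
          fix i j assume i: "i \<in> I1" and j: "j \<in> I1" and ij: "i \<noteq> j"
          have "prime (base i)" "prime (base j)"
            using baseprime[OF i[unfolded I1_def] psp1] baseprime[OF j[unfolded I1_def] psp1] by auto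
          moreover have "base i \<noteq> base j" using baseinj[of i PS j] i j ij PSQ unfolding I1_def by blast
          ultimately show "coprime (base i) (base j)" using primes_coprime by blast
        qed
        show "\<forall>i\<in>I1. base i > 0"
          using baseprime[OF _ psp1] prime_gt_0_nat unfolding I1_def by blast
      qed
      then show ?thesis using that by blast
    qed
    have u1: "p dvd u + A p" if "p \<in> PS" for p
    proof -
      have "Inl p \<in> I1" unfolding I1_def using that by blast
      from bspec[OF u(2) this] show ?thesis unfolding base_def by simp
    qed
    have u2: "q x dvd u + fst x" if "x \<in> X" for x
    proof -
      have "Inr x \<in> I1" unfolding I1_def using that by blast
      from bspec[OF u(2) this] show ?thesis unfolding base_def by simp
    qed
    define PS2 where "PS2 = {p::nat. prime p \<and> p \<le> u + w} - q ` X"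
    define I2 where "I2 = Inl ` PS2 \<union> Inr ` X"
    have PSQ2: "PS2 \<inter> q ` X = {}" unfolding PS2_def by blast
    have psp2: "\<And>p. p \<in> PS2 \<Longrightarrow> prime p" unfolding PS2_def by simp
    obtain v where v: "v \<ge> 1" "\<forall>i\<in>I2. base i ^ b dvd v +
        (case i of Inl p \<Rightarrow> (if p \<le> w then C p else 0) | Inr x \<Rightarrow> snd x)"
    proof -
      have "\<exists>v\<ge>1. \<forall>i\<in>I2. base i ^ b dvd v +
        (case i of Inl p \<Rightarrow> (if p \<le> w then C p else 0) | Inr x \<Rightarrow> snd x)"
      proof (rule crt_exists)
        have "finite PS2" unfolding PS2_def by (rule finite_subset[of _ "{..u+w}"]) auto
        then show "finite I2" unfolding I2_def using finX by (intro finite_UnI finite_imageI)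
        show "\<forall>i\<in>I2. \<forall>j\<in>I2. i \<noteq> j \<longrightarrow> coprime (base i ^ b) (base j ^ b)"
        proof (intro ballI impI)
          fix i j assume i: "i \<in> I2" and j: "j \<in> I2" and ij: "i \<noteq> j"
          have "prime (base i)" "prime (base j)"
            using baseprime[OF i[unfolded I2_def] psp2] baseprime[OF j[unfolded I2_def] psp2] by auto
          moreover have "base i \<noteq> base j" using baseinj[of i PS2 j] i j ij PSQ2 unfolding I2_def by blast
          ultimately have "coprime (base i) (base j)" using primes_coprime by blast
          then show "coprime (base i ^ b) (base j ^ b)" by simp
        qed
        show "\<forall>i\<in>I2. base i ^ b > 0"
        proof
          fix i assume i: "i \<in> I2"
          have "base i > 0" using baseprime[OF i[unfolded I2_def] psp2] prime_gt_0_nat by blast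
          then show "base i ^ b > 0" by simp
        qed
      qed
      then show ?thesis using that by blast
    qed
    have v1: "p ^ b dvd v + (if p \<le> w then C p else 0)" if "p \<in> PS2" for p
    proof -
      have "Inl p \<in> I2" unfolding I2_def using that by blast
      from bspec[OF v(2) this] show ?thesis unfolding base_def by simp
    qed
    have v2: "q x ^ b dvd v + snd x" if "x \<in> X" for x
    proof -
      have "Inr x \<in> I2" unfolding I2_def using that by blast
      from bspec[OF v(2) this] show ?thesis unfolding base_def by simp
    qed
    have vis: "b_visible b (u + r, v + s)" if rs: "(r, s) \<in> circles P" for r s
    proof (rule ccontr)
      assume nv: "\<not> b_visible b (u + r, v + s)"
      have rb: "1 \<le> r \<and> r \<le> w \<and> 1 \<le> s \<and> s \<le> w ^ b" using circ_box rs by blast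
      define g where "g = gcd_b b (u + r) (v + s)"
      have g: "g \<ge> 1" "g dvd u + r" "g ^ b dvd v + s"
        using gcd_b_in[of "u + r" b "v + s"] rb unfolding g_def by auto
      have "g \<noteq> 1" using nv unfolding b_visible_def g_def by simp
      then obtain p where pp: "prime p" "p dvd g" using prime_factor_nat by blast
      have pr: "p dvd u + r" using dvd_trans[OF pp(2) g(2)] .
      have ps: "p ^ b dvd v + s" using dvd_trans[OF dvd_power_same[OF pp(2)] g(3)] .
      have p0: "p > 0" using pp prime_gt_0_nat by blast
      have "p \<le> u + r" using pr dvd_imp_le rb by simp
      then have ple: "p \<le> u + w" using rb by simp
      show False
      proof (cases "p \<in> q ` X")
        case True
        then obtain x where x: "x \<in> X" "p = q x" by blast
        obtain r' s' where x': "x = (r', s')" by (cases x)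
        have rb': "1 \<le> r' \<and> r' \<le> w \<and> 1 \<le> s' \<and> s' \<le> w ^ b"
          using cross_box x(1) x' unfolding X_def by blast
        have wp: "w < p" using qp x by blast
        have wpb: "w ^ b < p ^ b" using wp assms(1) by (simp add: power_strict_mono)
        have "r mod p = r' mod p" using dvd2_mod_eq[OF pr] u2[OF x(1)] x x' by simp
        then have "r = r'" using rb rb' wp by simp
        moreover have "s mod p ^ b = s' mod p ^ b" using dvd2_mod_eq[OF ps] v2[OF x(1)] x x' by simp
        then have "s = s'" using rb rb' wpb by simp
        ultimately have "(r, s) \<in> crosses P" using x x' unfolding X_def by simp
        then show False using disj rs by blast
      next
        case False
        then have p2: "p \<in> PS2" unfolding PS2_def using pp ple by blast
        show False
        proof (cases "p \<le> w")
          case True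
          then have p1: "p \<in> PS" unfolding PS_def using pp by blast
          have "r mod p = A p mod p" using dvd2_mod_eq[OF pr u1[OF p1]] .
          then have ra: "r mod p = A p" using AC[OF pp(1)] unfolding A_def by simp
          have "s mod p ^ b = C p mod p ^ b" using dvd2_mod_eq[OF ps] v1[OF p2] True by simp
          then have sc: "s mod p ^ b = C p" using AC[OF pp(1)] unfolding C_def by simp
          have "\<forall>(r, s) \<in> circles P. \<not> (r mod p = A p \<and> s mod p ^ b = C p)"
            using AC[OF pp(1)] unfolding A_def C_def by blast
          then show False using rs ra sc by blast
        next
          case False
          have wpb: "w ^ b < p ^ b" using False assms(1) by (simp add: power_strict_mono)
          have "p ^ b dvd v + 0" using v1[OF p2] False by simp
          then have "s mod p ^ b = 0 mod p ^ b" using dvd2_mod_eq[OF ps] by blast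
          then show False using rb wpb by simp
        qed
      qed
    qed
    have invis: "b_invisible b (u + r, v + s)" if rs: "(r, s) \<in> crosses P" for r s
    proof -
      have x: "(r, s) \<in> X" using rs unfolding X_def .
      have "q (r, s) \<le> gcd_b b (u + r) (v + s)"
        using gcd_b_ge[of "u + r" "q (r, s)" b "v + s"] u2[OF x] v2[OF x] qp[OF x] u(1)
          prime_gt_0_nat by simp
      moreover have "q (r, s) > 1" using qp[OF x] prime_gt_1_nat by blast
      ultimately show ?thesis unfolding b_invisible_def b_visible_def by simp
    qed
    show "realizable b P" unfolding realizable_def Lat_def
      using u(1) v(1) vis invis by blast
  qed
qed

end
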